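(* Let $R$ be a commutative unital ring which is Noetherian and quasi-Euclidean. Let $\mathfrak{b}_1,\dots,\mathfrak{b}_k$ be proper ideals of $R$ and set $\mathfrak{b} = \mathfrak{b}_1 + \cdots + \mathfrak{b}_k$. Let $M = R/\mathfrak{b}_1 \times \cdots \times R/\mathfrak{b}_k$. For $\mathbf{m} = (m_1,\dots,m_k) \in M^k$, write $(m_i)_j \in R/\mathfrak{b}_j$ for the $j$-th coordinate of $m_i$, and define $\det(\mathbf{m}) \in R/\mathfrak{b}$ to be the determinant of the $k\times k$ matrix over $R/\mathfrak{b}$ whose $(i,j)$-entry is the image of $(m_i)_j$ under the natural surjection $R/\mathfrak{b}_j \twoheadrightarrow R/\mathfrak{b}$. Then two rows $\mathbf{m},\mathbf{m}' \in \mathrm{Um}_k(M)$ are $\mathrm{E}_k(R)$-equivalent if and only if $\det(\mathbf{m}) = \det(\mathbf{m}')$.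
   Context: A ring $R$ is quasi-Euclidean if for every $n \ge 2$ and every $\mathbf{r} = (r_1,\dots,r_n) \in R^n$ there exist $E \in \mathrm{E}_n(R)$ and $d \in R$ with $(d,0,\dots,0) = \mathbf{r}E$. $\mathrm{E}_n(R)$ is the subgroup of $\mathrm{GL}_n(R)$ generated by the elementary matrices (matrices differing from the identity in a single off-diagonal entry). $\mathrm{Um}_k(M)$ is the set of $\mathbf{m}=(m_1,\dots,m_k)\in M^k$ whose components generate $M$. Matrices act by right multiplication $(\mathbf{m}A)_j = \sum_i m_i A_{ij}$, and $\mathbf{m},\mathbf{m}'$ are $\mathrm{E}_k(R)$-equivalent if $\mathbf{m}'=\mathbf{m}E$ for some $E\in\mathrm{E}_k(R)$. *)

theory Defs
  imports "Jordan_Normal_Form.Determinant"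
begin

definition is_ideal :: "'a::comm_ring_1 set \<Rightarrow> bool" where
  "is_ideal I \<longleftrightarrow> 0 \<in> I \<and> (\<forall>x\<in>I. \<forall>y\<in>I. x + y \<in> I) \<and> (\<forall>r. \<forall>x\<in>I. r * x \<in> I)"

definition proper_ideal :: "'a::comm_ring_1 set \<Rightarrow> bool" where
  "proper_ideal I \<longleftrightarrow> is_ideal I \<and> (1::'a) \<notin> I"

definition noetherian_ring :: "'a::comm_ring_1 itself \<Rightarrow> bool" where
  "noetherian_ring TYPE('a) \<longleftrightarrow>
     (\<forall>f :: nat \<Rightarrow> 'a set. (\<forall>n. is_ideal (f n)) \<and> (\<forall>n. f n \<subseteq> f (Suc n))
        \<longrightarrow> (\<exists>N. \<forall>n\<ge>N. f n = f N))"

definition ideal_sum :: "nat \<Rightarrow> (nat \<Rightarrow> 'a::comm_ring_1 set) \<Rightarrow> 'a set" where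
  "ideal_sum k b = {s. \<exists>x. (\<forall>j<k. x j \<in> b j) \<and> s = (\<Sum>j<k. x j)}"

definition elem_mat :: "nat \<Rightarrow> nat \<Rightarrow> nat \<Rightarrow> 'a::comm_ring_1 \<Rightarrow> 'a mat" where
  "elem_mat n i j c = mat n n (\<lambda>(a,b). if a = b then 1 else if a = i \<and> b = j then c else 0)"

definition is_elementary :: "nat \<Rightarrow> 'a::comm_ring_1 mat \<Rightarrow> bool" where
  "is_elementary n A \<longleftrightarrow> (\<exists>i j c. i < n \<and> j < n \<and> i \<noteq> j \<and> A = elem_mat n i j c)"

(* E_n(R): subgroup of GL_n(R) generated by elementary matrices.  Since the inverse of
   an elementary matrix is elementary, this is the monoid they generate. *)
inductive_set E_group :: "nat \<Rightarrow> 'a::comm_ring_1 mat set" for n where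
  one: "1\<^sub>m n \<in> E_group n"
| step: "A \<in> E_group n \<Longrightarrow> is_elementary n B \<Longrightarrow> A * B \<in> E_group n"

definition row_mult :: "'a::comm_ring_1 vec \<Rightarrow> 'a mat \<Rightarrow> 'a vec" where
  "row_mult r A = vec (dim_col A) (\<lambda>j. \<Sum>i<dim_vec r. r $ i * A $$ (i, j))"

definition quasi_euclidean :: "'a::comm_ring_1 itself \<Rightarrow> bool" where
  "quasi_euclidean TYPE('a) \<longleftrightarrow>
     (\<forall>n\<ge>2. \<forall>r :: 'a vec. r \<in> carrier_vec n \<longrightarrow>
        (\<exists>E \<in> E_group n. \<exists>d. row_mult r E = vec n (\<lambda>j. if j = 0 then d else 0)))"

(* Elements of M = R/b_0 x ... x R/b_(k-1) are represented by functions x :: nat => 'a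
   (coordinate j a representative in R of an element of R/b_j).  A k-tuple
   m = (m_0,...,m_(k-1)) in M^k is represented by a k x k matrix over R whose row i
   represents m_i, i.e. entry (i,j) represents (m_i)_j. *)

definition M_eq :: "nat \<Rightarrow> (nat \<Rightarrow> 'a::comm_ring_1 set) \<Rightarrow> (nat \<Rightarrow> 'a) \<Rightarrow> (nat \<Rightarrow> 'a) \<Rightarrow> bool" where
  "M_eq k b x y \<longleftrightarrow> (\<forall>j<k. x j - y j \<in> b j)"

definition Um :: "nat \<Rightarrow> (nat \<Rightarrow> 'a::comm_ring_1 set) \<Rightarrow> 'a mat \<Rightarrow> bool" where
  "Um k b m \<longleftrightarrow> m \<in> carrier_mat k k \<and>
     (\<forall>x :: nat \<Rightarrow> 'a. \<exists>r :: nat \<Rightarrow> 'a.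
        M_eq k b x (\<lambda>j. \<Sum>i<k. r i * m $$ (i, j)))"

definition E_equiv :: "nat \<Rightarrow> (nat \<Rightarrow> 'a::comm_ring_1 set) \<Rightarrow> 'a mat \<Rightarrow> 'a mat \<Rightarrow> bool" where
  "E_equiv k b m m' \<longleftrightarrow> (\<exists>E \<in> E_group k.
     \<forall>j<k. M_eq k b (\<lambda>c. m' $$ (j, c)) (\<lambda>c. \<Sum>i<k. E $$ (i, j) * m $$ (i, c)))"

(* det(m) in R/b: determinant over R/b of the reductions; computed as the determinant
   over R of representatives, equality taken modulo b = b_0 + ... + b_(k-1). *)
definition det_eq_mod :: "nat \<Rightarrow> (nat \<Rightarrow> 'a::comm_ring_1 set) \<Rightarrow> 'a mat \<Rightarrow> 'a mat \<Rightarrow> bool" where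
  "det_eq_mod k b m m' \<longleftrightarrow> det m - det m' \<in> ideal_sum k b"

end

theory Submission
  imports Defs
begin

lemma elem_mat_addrow: "i \<noteq> j \<Longrightarrow> elem_mat n i j c = addrow_mat n c i j"
  unfolding elem_mat_def addrow_mat_def by (intro eq_matI) auto

lemma elem_carrier[simp]: "elem_mat n i j c \<in> carrier_mat n n"
  unfolding elem_mat_def by auto

lemma E_carrier: "E \<in> E_group n \<Longrightarrow> E \<in> carrier_mat n n"
proof (induction rule: E_group.induct)
  case one then show ?case by auto
next
  case (step A B) then show ?case unfolding is_elementary_def by auto
qed

lemma E_elem: "is_elementary n B \<Longrightarrow> B \<in> E_group n"
proof -
  assume "is_elementary n B"
  moreover have "B \<in> carrier_mat n n" using \<open>is_elementary n B\<close> unfolding is_elementary_def by auto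
  ultimately show ?thesis using E_group.step[OF E_group.one] by (metis left_mult_one_mat)
qed

lemma E_addrow: "i < n \<Longrightarrow> j < n \<Longrightarrow> i \<noteq> j \<Longrightarrow> addrow_mat n c i j \<in> E_group n"
  by (rule E_elem, unfold is_elementary_def, metis elem_mat_addrow)

lemma E_mult: "B \<in> E_group n \<Longrightarrow> A \<in> E_group n \<Longrightarrow> A * B \<in> E_group n"
proof (induction B rule: E_group.induct)
  case one then show ?case using E_carrier by (metis right_mult_one_mat)
next
  case (step C D)
  have "A * (C * D) = (A * C) * D"
    using E_carrier[OF step.prems] E_carrier[OF step.hyps(1)] step.hyps(2)
    unfolding is_elementary_def by (metis assoc_mult_mat elem_carrier)
  then show ?case using step E_group.step by metis
qed

lemma E_inv: "E \<in> E_group n \<Longrightarrow> \<exists>F\<in>E_group n. F * E = 1\<^sub>m n \<and> E * F = 1\<^sub>m n"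
proof (induction rule: E_group.induct)
  case one then show ?case by (intro bexI[of _ "1\<^sub>m n"]) (auto intro: E_group.one)
next
  case (step A B)
  then obtain F where F: "F \<in> E_group n" "F * A = 1\<^sub>m n" "A * F = 1\<^sub>m n" by auto
  from step(2) obtain i j c where ij: "i < n" "j < n" "i \<noteq> j" and B: "B = addrow_mat n c i j"
    unfolding is_elementary_def using elem_mat_addrow by metis
  define G where "G = addrow_mat n (-c) i j"
  have G: "G \<in> E_group n" unfolding G_def using E_addrow ij by auto
  have GB: "G * B = 1\<^sub>m n" unfolding G_def B using addrow_mat_inv[OF ij(1,2,3), of "-c"] by simp
  have BG: "B * G = 1\<^sub>m n" unfolding G_def B using addrow_mat_inv[OF ij(1,2,3), of "c"] by simp
  have cA: "A \<in> carrier_mat n n" "F \<in> carrier_mat n n" using E_carrier step F by auto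
  have cB: "B \<in> carrier_mat n n" "G \<in> carrier_mat n n" unfolding B G_def by auto
  have "(G * F) * (A * B) = G * ((F * A) * B)" using cA cB by (simp add: assoc_mult_mat[of _ n n _ n _ n])
  also have "\<dots> = 1\<^sub>m n" using F GB cB by simp
  finally have 1: "(G * F) * (A * B) = 1\<^sub>m n" .
  have "(A * B) * (G * F) = A * ((B * G) * F)" using cA cB by (simp add: assoc_mult_mat[of _ n n _ n _ n])
  also have "\<dots> = 1\<^sub>m n" using F BG cA by simp
  finally have 2: "(A * B) * (G * F) = 1\<^sub>m n" .
  show ?case using 1 2 E_mult[OF F(1) G] by blast
qed

lemma E_transpose: "E \<in> E_group n \<Longrightarrow> transpose_mat E \<in> E_group n"
proof (induction rule: E_group.induct)
  case one then show ?case by (simp add: E_group.one)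
next
  case (step A B)
  from step(2) obtain i j c where ij: "i < n" "j < n" "i \<noteq> j" and B: "B = elem_mat n i j c"
    unfolding is_elementary_def by metis
  have "transpose_mat B = elem_mat n j i c" unfolding B elem_mat_def by (intro eq_matI) auto
  then have tB: "transpose_mat B \<in> E_group n" using E_elem ij unfolding is_elementary_def by metis
  have "transpose_mat (A * B) = transpose_mat B * transpose_mat A"
    using transpose_mult[of A n n B n] E_carrier[OF step(1)] B by simp
  then show ?case using E_mult[OF step(3) tB] by simp
qed

lemma E_det: "E \<in> E_group n \<Longrightarrow> det E = 1"
proof (induction rule: E_group.induct)
  case one then show ?case by simp
next
  case (step A B)
  from step(2) obtain i j c where ij: "i < n" "j < n" "i \<noteq> j" and B: "B = addrow_mat n c i j"
    unfolding is_elementary_def using elem_mat_addrow by metis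
  show ?case using det_mult[OF E_carrier[OF step(1)], of B] det_addrow_mat[OF ij(3)] step(3) B by simp
qed

lemma mult_entry: "X \<in> carrier_mat k n \<Longrightarrow> Y \<in> carrier_mat n m \<Longrightarrow> i < k \<Longrightarrow> c < m \<Longrightarrow>
   (X * Y) $$ (i,c) = (\<Sum>l<n. X $$ (i,l) * Y $$ (l,c))"
  by (auto simp: scalar_prod_def atLeast0LessThan intro!: sum.cong)


definition cg :: "nat \<Rightarrow> (nat \<Rightarrow> 'a::comm_ring_1) \<Rightarrow> 'a mat \<Rightarrow> 'a mat \<Rightarrow> bool" where
  "cg k g X Y \<longleftrightarrow> (\<forall>i<k. \<forall>c<k. g c dvd (X $$ (i,c) - Y $$ (i,c)))"

definition UmG :: "nat \<Rightarrow> (nat \<Rightarrow> 'a::comm_ring_1) \<Rightarrow> 'a mat \<Rightarrow> bool" where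
  "UmG k g A \<longleftrightarrow> (\<forall>x. \<exists>r. \<forall>c<k. g c dvd (x c - (\<Sum>i<k. r i * A $$ (i,c))))"

definition inJ :: "nat \<Rightarrow> (nat \<Rightarrow> 'a::comm_ring_1) \<Rightarrow> 'a \<Rightarrow> bool" where
  "inJ k g x \<longleftrightarrow> (\<exists>s. x = (\<Sum>c<k. s c * g c))"

lemma cg_refl: "cg k g X X" unfolding cg_def by auto
lemma cg_sym: "cg k g X Y \<Longrightarrow> cg k g Y X"
  unfolding cg_def
proof (intro allI impI)
  fix i c assume "\<forall>i<k. \<forall>c<k. g c dvd X $$ (i, c) - Y $$ (i, c)" "i < k" "c < k"
  then have "g c dvd - (X $$ (i, c) - Y $$ (i, c))" by (simp only: dvd_minus_iff)
  then show "g c dvd Y $$ (i, c) - X $$ (i, c)" by simp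
qed
lemma cg_trans: "cg k g X Y \<Longrightarrow> cg k g Y Z \<Longrightarrow> cg k g X Z"
  unfolding cg_def
proof (intro allI impI)
  fix i c assume "\<forall>i<k. \<forall>c<k. g c dvd X $$ (i, c) - Y $$ (i, c)" "\<forall>i<k. \<forall>c<k. g c dvd Y $$ (i, c) - Z $$ (i, c)" "i < k" "c < k"
  then have "g c dvd (X $$ (i, c) - Y $$ (i, c)) + (Y $$ (i, c) - Z $$ (i, c))" by (intro dvd_add) auto
  then show "g c dvd X $$ (i, c) - Z $$ (i, c)" by simp
qed

lemma cg_mult: assumes "F \<in> carrier_mat k k" "X \<in> carrier_mat k k" "Y \<in> carrier_mat k k" "cg k g X Y"
  shows "cg k g (F * X) (F * Y)"
  unfolding cg_def
proof (intro allI impI)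
  fix i c assume ic: "i < k" "c < k"
  have "(F * X) $$ (i,c) - (F * Y) $$ (i,c) = (\<Sum>l<k. F $$ (i,l) * (X $$ (l,c) - Y $$ (l,c)))"
    using assms ic by (simp add: mult_entry[OF assms(1,2) ic] mult_entry[OF assms(1,3) ic] sum_subtractf right_diff_distrib del: index_mult_mat)
  also have "g c dvd \<dots>" using assms(4) ic unfolding cg_def by (auto intro!: dvd_sum dvd_mult)
  finally show "g c dvd (F * X) $$ (i,c) - (F * Y) $$ (i,c)" .
qed

lemma UmG_cg: assumes "cg k g X Y" "UmG k g X" shows "UmG k g Y"
  unfolding UmG_def
proof
  fix x
  obtain r where r: "\<forall>c<k. g c dvd (x c - (\<Sum>i<k. r i * X $$ (i,c)))" using assms(2) unfolding UmG_def by blast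
  have "\<forall>c<k. g c dvd (x c - (\<Sum>i<k. r i * Y $$ (i,c)))"
  proof (intro allI impI)
    fix c assume c: "c < k"
    have "x c - (\<Sum>i<k. r i * Y $$ (i,c)) = (x c - (\<Sum>i<k. r i * X $$ (i,c))) + (\<Sum>i<k. r i * (X $$ (i,c) - Y $$ (i,c)))"
      by (simp add: sum_subtractf right_diff_distrib)
    also have "g c dvd \<dots>" using r c assms(1) unfolding cg_def by (auto intro!: dvd_add dvd_sum dvd_mult)
    finally show "g c dvd (x c - (\<Sum>i<k. r i * Y $$ (i,c)))" .
  qed
  then show "\<exists>r. \<forall>c<k. g c dvd (x c - (\<Sum>i<k. r i * Y $$ (i,c)))" by blast
qed

lemma lc_mult: assumes "F \<in> carrier_mat k k" "Y \<in> carrier_mat k k" "c < k"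
  shows "(\<Sum>j<k. (\<Sum>i<k. r i * F $$ (i,j)) * Y $$ (j,c)) = (\<Sum>i<k. r i * (F * Y) $$ (i,c))"
proof -
  have "(\<Sum>j<k. (\<Sum>i<k. r i * F $$ (i,j)) * Y $$ (j,c)) = (\<Sum>j<k. \<Sum>i<k. r i * (F $$ (i,j) * Y $$ (j,c)))"
    by (simp add: sum_distrib_right mult.assoc)
  also have "\<dots> = (\<Sum>i<k. \<Sum>j<k. r i * (F $$ (i,j) * Y $$ (j,c)))" by (rule sum.swap)
  also have "\<dots> = (\<Sum>i<k. r i * (\<Sum>j<k. F $$ (i,j) * Y $$ (j,c)))" by (simp add: sum_distrib_left)
  also have "\<dots> = (\<Sum>i<k. r i * (F * Y) $$ (i,c))"
    by (rule sum.cong[OF refl]) (simp add: mult_entry[OF assms(1,2) _ assms(3)] del: index_mult_mat)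
  finally show ?thesis .
qed

lemma UmG_inv: assumes E: "E \<in> carrier_mat k k" and F: "F \<in> carrier_mat k k" and FE: "F * E = 1\<^sub>m k"
  and X: "X \<in> carrier_mat k k" and U: "UmG k g X"
  shows "UmG k g (E * X)"
  unfolding UmG_def
proof
  fix x
  obtain r where r: "\<forall>c<k. g c dvd (x c - (\<Sum>i<k. r i * X $$ (i,c)))" using U unfolding UmG_def by blast
  have "F * (E * X) = (F * E) * X" using E F X by (simp add: assoc_mult_mat[of _ k k _ k _ k])
  then have FEX: "F * (E * X) = X" using FE X by simp
  have EX: "E * X \<in> carrier_mat k k" using E X by simp
  have "\<forall>c<k. (\<Sum>j<k. (\<Sum>i<k. r i * F $$ (i,j)) * (E * X) $$ (j,c)) = (\<Sum>i<k. r i * X $$ (i,c))"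
    using lc_mult[OF F EX] FEX by simp
  then show "\<exists>r. \<forall>c<k. g c dvd (x c - (\<Sum>i<k. r i * (E * X) $$ (i,c)))" using r
    by (intro exI[of _ "\<lambda>j. \<Sum>i<k. r i * F $$ (i,j)"]) auto
qed

lemma inJ_add: assumes "inJ k g x" "inJ k g y" shows "inJ k g (x + y)"
proof -
  obtain s t where "x = (\<Sum>c<k. s c * g c)" "y = (\<Sum>c<k. t c * g c)" using assms unfolding inJ_def by blast
  then have "x + y = (\<Sum>c<k. (s c + t c) * g c)" by (simp add: sum.distrib distrib_right)
  then show ?thesis unfolding inJ_def by (rule exI[of _ "\<lambda>c. s c + t c"])
qed
lemma inJ_mult: assumes "inJ k g x" shows "inJ k g (a * x)"
proof -
  obtain s where "x = (\<Sum>c<k. s c * g c)" using assms unfolding inJ_def by blast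
  then have "a * x = (\<Sum>c<k. (a * s c) * g c)" by (simp add: sum_distrib_left mult.assoc)
  then show ?thesis unfolding inJ_def by (rule exI[of _ "\<lambda>c. a * s c"])
qed
lemma inJ_zero: "inJ k g 0"
  unfolding inJ_def by (auto intro!: exI[of _ "\<lambda>c. 0"])
lemma inJ_neg: "inJ k g x \<Longrightarrow> inJ k g (- x)"
  using inJ_mult[of k g x "-1"] by simp
lemma inJ_diff: "inJ k g x \<Longrightarrow> inJ k g y \<Longrightarrow> inJ k g (x - y)"
  using inJ_add[of k g x "- y"] inJ_neg[of k g y] by simp
lemma inJ_gen: assumes "c < k" "g c dvd x" shows "inJ k g x"
proof -
  obtain w where w: "x = g c * w" using assms(2) by blast
  have "(\<Sum>j<k. (if j = c then w else 0) * g j) = (\<Sum>j<k. if j = c then w * g c else 0)"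
    by (rule sum.cong) auto
  also have "\<dots> = w * g c" using assms(1) by simp
  finally have "(\<Sum>j<k. (if j = c then w else 0) * g j) = w * g c" .
  then show ?thesis unfolding inJ_def using w by (metis mult.commute)
qed

lemma inJ_sum: "finite S \<Longrightarrow> (\<forall>p\<in>S. inJ k g (f p)) \<Longrightarrow> inJ k g (\<Sum>p\<in>S. f p)"
  by (induction S rule: finite_induct) (auto intro: inJ_zero inJ_add)

lemma inJ_prod: "finite S \<Longrightarrow> (\<forall>i\<in>S. inJ k g (a i - b i)) \<Longrightarrow> inJ k g ((\<Prod>i\<in>S. a i) - (\<Prod>i\<in>S. b i))"
proof (induction S rule: finite_induct)
  case empty then show ?case by (simp add: inJ_zero)
next
  case (insert x S)
  have "(\<Prod>i\<in>insert x S. a i) - (\<Prod>i\<in>insert x S. b i) =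
        a x * ((\<Prod>i\<in>S. a i) - (\<Prod>i\<in>S. b i)) + (\<Prod>i\<in>S. b i) * (a x - b x)"
    using insert(1,2) by (simp add: algebra_simps)
  then show ?case using insert by (auto intro!: inJ_add inJ_mult)
qed

lemma det_cg: assumes X: "X \<in> carrier_mat k k" and Y: "Y \<in> carrier_mat k k" and c: "cg k g X Y"
  shows "inJ k g (det X - det Y)"
proof -
  have "det X - det Y = (\<Sum>p\<in>{p. p permutes {0..<k}}. signof p * ((\<Prod>i = 0..<k. X $$ (i, p i)) - (\<Prod>i = 0..<k. Y $$ (i, p i))))"
    unfolding det_def'[OF X] det_def'[OF Y] by (simp add: sum_subtractf right_diff_distrib)
  also have "inJ k g \<dots>"
  proof (rule inJ_sum)
    show "finite {p. p permutes {0..<k}}" by (simp add: finite_permutations)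
    show "\<forall>p\<in>{p. p permutes {0..<k}}. inJ k g (signof p * ((\<Prod>i = 0..<k. X $$ (i, p i)) - (\<Prod>i = 0..<k. Y $$ (i, p i))))"
    proof
      fix p assume "p \<in> {p. p permutes {0..<k}}"
      then have p: "\<forall>i<k. p i < k" by (auto dest: permutes_in_image)
      show "inJ k g (signof p * ((\<Prod>i = 0..<k. X $$ (i, p i)) - (\<Prod>i = 0..<k. Y $$ (i, p i))))"
      proof (intro inJ_mult inJ_prod ballI)
        fix i assume "i \<in> {0..<k}"
        then show "inJ k g (X $$ (i, p i) - Y $$ (i, p i))"
          using c p unfolding cg_def by (intro inJ_gen[of "p i"]) auto
      qed simp
    qed
  qed
  finally show ?thesis .
qed


lemma assoc3: assumes "P1 \<in> carrier_mat k k" "P2 \<in> carrier_mat k k" "P3 \<in> carrier_mat k k" "X \<in> carrier_mat k k"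
  shows "P1 * (P2 * (P3 * X)) = (P1 * (P2 * P3)) * X"
proof -
  have "P2 * (P3 * X) = (P2 * P3) * X" by (rule assoc_mult_mat[symmetric, OF assms(2,3,4)])
  moreover have "P2 * P3 \<in> carrier_mat k k" using assms by simp
  ultimately show ?thesis using assoc_mult_mat[symmetric, OF assms(1) _ assms(4)] by metis
qed

lemma row_mult_entry: "dim_vec r = dim_row E \<Longrightarrow> j < dim_col E \<Longrightarrow>
  row_mult r E $ j = (\<Sum>i<dim_row E. r $ i * E $$ (i,j))"
  unfolding row_mult_def by simp

lemma aux1: fixes a b d e00 e01 e10 e11 f00 f10 :: "'a::comm_ring_1"
  assumes h1: "a*e00 + b*e10 = d" and h2: "a*e01+b*e11 = 0" and h3: "e00*f00 + e01*f10 = 1" and h4: "e10*f00+e11*f10 = 0"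
  shows "a = d*f00"
proof -
  have x: "a*e01 = -(b*e11)" using h2 by (simp add: eq_neg_iff_add_eq_0)
  have y: "e11*f10 = -(e10*f00)" using h4 by (simp add: eq_neg_iff_add_eq_0 add.commute)
  have "a = a*(e00*f00 + e01*f10)" using h3 by simp
  also have "\<dots> = a*e00*f00 + (a*e01)*f10" by (simp add: distrib_left mult.assoc)
  also have "\<dots> = a*e00*f00 - b*(e11*f10)" using x by (simp add: mult.assoc)
  also have "\<dots> = a*e00*f00 + b*e10*f00" using y by (simp add: mult.assoc)
  also have "\<dots> = d*f00" using h1 by (simp add: distrib_right[symmetric])
  finally show ?thesis .
qed

lemma bezout_QE: assumes QE: "quasi_euclidean TYPE('a::comm_ring_1)"
  shows "\<exists>d a' b' s t. (a::'a) = d * a' \<and> b = d * b' \<and> s * a' + t * b' = 1"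
proof -
  define r where "r = vec 2 (\<lambda>i. if i = 0 then a else b)"
  have "r \<in> carrier_vec 2" unfolding r_def by simp
  then obtain E d where E: "E \<in> E_group 2" and rE: "row_mult r E = vec 2 (\<lambda>j. if j = 0 then d else 0)"
    using QE unfolding quasi_euclidean_def by fastforce
  obtain F where F: "F \<in> E_group 2" "F * E = 1\<^sub>m 2" "E * F = 1\<^sub>m 2" using E_inv[OF E] by blast
  have cE: "E \<in> carrier_mat 2 2" and cF: "F \<in> carrier_mat 2 2" using E_carrier E F by auto
  have s2: "\<And>f. (\<Sum>i<2::nat. f i) = f 0 + f 1" by (simp add: numeral_2_eq_2)
  have d1: "a * E $$ (0,0) + b * E $$ (1,0) = d"
    using arg_cong[OF rE, of "\<lambda>v. v $ 0"] cE unfolding r_def by (simp add: row_mult_entry s2)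
  have d2: "a * E $$ (0,1) + b * E $$ (1,1) = 0"
    using arg_cong[OF rE, of "\<lambda>v. v $ 1"] cE unfolding r_def by (simp add: row_mult_entry s2)
  have h: "(\<Sum>l<2. X $$ (i,l) * Y $$ (l,j)) = (if i = j then 1 else 0)"
    if X: "X \<in> carrier_mat 2 2" and Y: "Y \<in> carrier_mat 2 2" and XY: "X * Y = 1\<^sub>m 2" and i: "i < 2" and j: "j < 2"
    for X Y :: "'a mat" and i j
  proof -
    have "(X * Y) $$ (i,j) = (\<Sum>l<2. X $$ (i,l) * Y $$ (l,j))" by (rule mult_entry[OF X Y i j])
    moreover have "(X * Y) $$ (i,j) = (if i = j then 1 else 0)" using XY i j by simp
    ultimately show ?thesis by simp
  qed
  have e1: "E $$ (0,0) * F $$ (0,0) + E $$ (0,1) * F $$ (1,0) = 1"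
    using h[OF cE cF F(3), of 0 0] by (simp add: s2)
  have e2: "E $$ (0,0) * F $$ (0,1) + E $$ (0,1) * F $$ (1,1) = 0"
    using h[OF cE cF F(3), of 0 1] by (simp add: s2)
  have e3: "E $$ (1,0) * F $$ (0,0) + E $$ (1,1) * F $$ (1,0) = 0"
    using h[OF cE cF F(3), of 1 0] by (simp add: s2)
  have e4: "E $$ (1,0) * F $$ (0,1) + E $$ (1,1) * F $$ (1,1) = 1"
    using h[OF cE cF F(3), of 1 1] by (simp add: s2)
  have f1: "F $$ (0,0) * E $$ (0,0) + F $$ (0,1) * E $$ (1,0) = 1"
    using h[OF cF cE F(2), of 0 0] by (simp add: s2)
  have "a = d * F $$ (0,0)" using aux1[OF d1 d2 e1 e3] .
  moreover have "b = d * F $$ (0,1)" using aux1[of b "E $$ (1,0)" a "E $$ (0,0)" d "E $$ (1,1)" "E $$ (0,1)" "F $$ (0,1)" "F $$ (1,1)"] d1 d2 e2 e4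
    by (simp add: add.commute)
  moreover have "E $$ (0,0) * F $$ (0,0) + E $$ (1,0) * F $$ (0,1) = 1" using f1 by (simp only: mult.commute)
  ultimately show ?thesis by blast
qed

lemma col0: assumes QE: "quasi_euclidean TYPE('a::comm_ring_1)" and k: "2 \<le> k"
  and A: "(A :: 'a mat) \<in> carrier_mat k k" and U: "UmG k g A"
  shows "\<exists>E\<in>E_group k. \<exists>A1\<in>carrier_mat k k. cg k g (E * A) A1 \<and> (\<forall>i<k. A1 $$ (i,0) = (if i = 0 then 1 else 0))"
proof -
  have "col A 0 \<in> carrier_vec k" using A unfolding carrier_vec_def carrier_mat_def by simp
  then obtain E0 d where E0: "E0 \<in> E_group k" and rE: "row_mult (col A 0) E0 = vec k (\<lambda>j. if j = 0 then d else 0)"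
    using QE k unfolding quasi_euclidean_def by fastforce
  have cE0: "E0 \<in> carrier_mat k k" using E_carrier[OF E0] .
  define T where "T = transpose_mat E0"
  have T: "T \<in> E_group k" unfolding T_def using E_transpose[OF E0] .
  have cT: "T \<in> carrier_mat k k" using E_carrier[OF T] .
  define A0 where "A0 = T * A"
  have cA0: "A0 \<in> carrier_mat k k" unfolding A0_def using cT A by simp
  have A0c: "A0 $$ (i,0) = (if i = 0 then d else 0)" if i: "i < k" for i
  proof -
    have "A0 $$ (i,0) = (\<Sum>l<k. T $$ (i,l) * A $$ (l,0))"
      unfolding A0_def using mult_entry[OF cT A i] k by simp
    also have "\<dots> = (\<Sum>l<k. col A 0 $ l * E0 $$ (l,i))"
      using i cE0 A k unfolding T_def by (intro sum.cong) auto
    also have "\<dots> = row_mult (col A 0) E0 $ i" using row_mult_entry[of "col A 0" E0 i] cE0 A i by simp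
    finally show ?thesis using rE i by simp
  qed
  obtain FT where FT: "FT \<in> E_group k" "FT * T = 1\<^sub>m k" using E_inv[OF T] by blast
  have U0: "UmG k g A0" unfolding A0_def using UmG_inv[OF cT E_carrier[OF FT(1)] FT(2) A U] .
  obtain \<rho> where \<rho>: "\<forall>c<k. g c dvd ((if c = 0 then 1 else 0) - (\<Sum>i<k. \<rho> i * A0 $$ (i,c)))"
    using spec[OF U0[unfolded UmG_def], of "\<lambda>c. if c = 0 then 1 else 0"] by blast
  have "(\<Sum>i<k. \<rho> i * A0 $$ (i,0)) = (\<Sum>i<k. if i = 0 then \<rho> 0 * d else 0)"
    using A0c by (intro sum.cong) auto
  also have "\<dots> = \<rho> 0 * d" using k by simp
  moreover have "0 < k" using k by simp
  ultimately have "g 0 dvd 1 - \<rho> 0 * d" using \<rho> by auto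
  define u where "u = \<rho> 0"
  define e where "e = 1 - u * d"
  have ge: "g 0 dvd e" unfolding e_def u_def by fact
  define A0' where "A0' = mat k k (\<lambda>(i,j). if i = 1 \<and> j = 0 then e else A0 $$ (i,j))"
  have cA0': "A0' \<in> carrier_mat k k" unfolding A0'_def by simp
  have cg0: "cg k g A0 A0'"
    unfolding cg_def A0'_def using ge A0c by (auto simp: dvd_minus_iff)
  define A1 where "A1 = addrow (-1) 1 0 (addrow (1 - d) 0 1 (addrow u 1 0 A0'))"
  define P where "P = addrow_mat k (-1) 1 0 * (addrow_mat k (1 - d) 0 1 * addrow_mat k u 1 0)"
  have cP: "P \<in> carrier_mat k k" unfolding P_def by (rule mult_carrier_mat[of _ k k _ k], simp, rule mult_carrier_mat[of _ k k _ k], simp_all)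
  have PE: "P \<in> E_group k" unfolding P_def using k
    by (intro E_mult E_addrow) auto
  have k0: "0 < k" "1 < k" using k by auto
  have r1: "addrow u 1 0 A0' = addrow_mat k u 1 0 * A0'" by (rule addrow_mat[OF cA0' k0(1)])
  have cr1: "addrow u 1 0 A0' \<in> carrier_mat k k" using cA0' by simp
  have r2: "addrow (1 - d) 0 1 (addrow u 1 0 A0') = addrow_mat k (1 - d) 0 1 * addrow u 1 0 A0'"
    by (rule addrow_mat[OF cr1 k0(2)])
  have cr2: "addrow (1 - d) 0 1 (addrow u 1 0 A0') \<in> carrier_mat k k" using cA0' by simp
  have r3: "A1 = addrow_mat k (-1) 1 0 * addrow (1 - d) 0 1 (addrow u 1 0 A0')"
    unfolding A1_def by (rule addrow_mat[OF cr2 k0(1)])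
  have "A1 = addrow_mat k (-1) 1 0 * (addrow_mat k (1 - d) 0 1 * (addrow_mat k u 1 0 * A0'))"
    using r1 r2 r3 by simp
  also have "\<dots> = P * A0'" unfolding P_def by (rule assoc3[of _ k]) (simp_all add: cA0')
  finally have A1P: "A1 = P * A0'" .
  have cA1: "A1 \<in> carrier_mat k k" using A1P cP cA0' by simp
  have A0'c: "A0' $$ (i,0) = (if i = 0 then d else if i = 1 then e else 0)" if "i < k" for i
    unfolding A0'_def using that A0c k by auto
  have A1c: "A1 $$ (i,0) = (if i = 0 then 1 else 0)" if i: "i < k" for i
    unfolding A1_def using i k cA0' A0'c[of 0] A0'c[of 1] A0'c[OF i] unfolding e_def
    by (auto simp: algebra_simps)
  have "cg k g (P * A0) (P * A0')" using cg_mult[OF cP cA0 cA0' cg0] .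
  moreover have "P * A0 = (P * T) * A" unfolding A0_def using cP cT A by (simp add: assoc_mult_mat[of _ k k _ k _ k])
  ultimately have "cg k g ((P * T) * A) A1" using A1P by simp
  moreover have "P * T \<in> E_group k" using E_mult[OF T PE] .
  ultimately show ?thesis using cA1 A1c by blast
qed


definition lift :: "nat \<Rightarrow> 'a::comm_ring_1 mat \<Rightarrow> 'a mat" where
  "lift m X = mat (Suc m) (Suc m) (\<lambda>(i,j). if i = 0 then (if j = 0 then 1 else 0) else if j = 0 then 0 else X $$ (i - 1, j - 1))"

definition dl :: "nat \<Rightarrow> 'a::comm_ring_1 mat \<Rightarrow> 'a mat" where
  "dl m A = mat m m (\<lambda>(i,j). A $$ (Suc i, Suc j))"

lemma lift_carrier[simp]: "lift m X \<in> carrier_mat (Suc m) (Suc m)"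
  unfolding lift_def by simp

lemma lift_dim[simp]: "dim_row (lift m X) = Suc m" "dim_col (lift m X) = Suc m"
  unfolding lift_def by simp_all

lemma lift_index: "i < Suc m \<Longrightarrow> j < Suc m \<Longrightarrow> lift m X $$ (i,j) =
   (if i = 0 then (if j = 0 then 1 else 0) else if j = 0 then 0 else X $$ (i - 1, j - 1))"
  unfolding lift_def by simp

lemma lift_mult: assumes X: "X \<in> carrier_mat m m" and Y: "Y \<in> carrier_mat m m"
  shows "lift m X * lift m Y = lift m (X * Y)"
proof (rule eq_matI)
  fix i j assume i: "i < dim_row (lift m (X * Y))" and j: "j < dim_col (lift m (X * Y))"
  then have i': "i < Suc m" and j': "j < Suc m" by (auto simp: lift_def)
  have "(lift m X * lift m Y) $$ (i,j) = (\<Sum>l<Suc m. lift m X $$ (i,l) * lift m Y $$ (l,j))"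
    by (rule mult_entry[OF lift_carrier lift_carrier i' j'])
  also have "\<dots> = lift m X $$ (i,0) * lift m Y $$ (0,j) + (\<Sum>l<m. lift m X $$ (i,Suc l) * lift m Y $$ (Suc l,j))"
    by (rule sum.lessThan_Suc_shift)
  also have "\<dots> = lift m (X * Y) $$ (i,j)"
  proof (cases "i = 0")
    case True then show ?thesis using i' j' by (simp add: lift_index)
  next
    case False
    then obtain i0 where i0: "i = Suc i0" "i0 < m" using i' by (cases i) auto
    show ?thesis
    proof (cases "j = 0")
      case True then show ?thesis using i' j' i0 by (simp add: lift_index)
    next
      case False
      then obtain j0 where j0: "j = Suc j0" "j0 < m" using j' by (cases j) auto
      have "(X * Y) $$ (i0, j0) = (\<Sum>l<m. X $$ (i0,l) * Y $$ (l,j0))" by (rule mult_entry[OF X Y i0(2) j0(2)])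
      then show ?thesis using i0 j0 by (simp add: lift_index)
    qed
  qed
  finally show "(lift m X * lift m Y) $$ (i,j) = lift m (X * Y) $$ (i,j)" .
qed (auto simp: lift_def)

lemma lift_one: "lift m (1\<^sub>m m) = 1\<^sub>m (Suc m)"
  by (rule eq_matI) (auto simp: lift_def)

lemma lift_elem: "lift m (elem_mat m i j c) = elem_mat (Suc m) (Suc i) (Suc j) c"
  by (rule eq_matI) (auto simp: lift_def elem_mat_def)

lemma lift_E: "E \<in> E_group m \<Longrightarrow> lift m E \<in> E_group (Suc m)"
proof (induction rule: E_group.induct)
  case one then show ?case by (simp add: lift_one E_group.one)
next
  case (step A B)
  from step(2) obtain i j c where ij: "i < m" "j < m" "i \<noteq> j" and B: "B = elem_mat m i j c"
    unfolding is_elementary_def by metis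
  have "lift m (A * B) = lift m A * lift m B"
    using lift_mult[OF E_carrier[OF step(1)], of B] B by simp
  moreover have "is_elementary (Suc m) (lift m B)" unfolding B lift_elem is_elementary_def using ij by auto
  ultimately show ?case using E_group.step[OF step(3)] by simp
qed

lemma det_lift: assumes X: "X \<in> carrier_mat m m" shows "det (lift m X) = det X"
proof -
  have "det (lift m X) = (\<Sum>i<Suc m. lift m X $$ (i,0) * cofactor (lift m X) i 0)"
    by (rule laplace_expansion_column[OF lift_carrier]) simp
  also have "\<dots> = (\<Sum>i<Suc m. if i = 0 then cofactor (lift m X) 0 0 else 0)"
    by (rule sum.cong) (auto simp: lift_index)
  also have "\<dots> = cofactor (lift m X) 0 0" by simp
  also have "mat_delete (lift m X) 0 0 = X"
    using X unfolding mat_delete_def by (intro eq_matI) (auto simp: lift_index)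
  then have "cofactor (lift m X) 0 0 = det X" unfolding cofactor_def by simp
  finally show ?thesis .
qed

lemma cg_lift: assumes "cg m (\<lambda>c. g (Suc c)) X Y" shows "cg (Suc m) g (lift m X) (lift m Y)"
  unfolding cg_def
proof (intro allI impI)
  fix i c assume i: "i < Suc m" and c: "c < Suc m"
  show "g c dvd lift m X $$ (i,c) - lift m Y $$ (i,c)"
  proof (cases "i = 0 \<or> c = 0")
    case True then show ?thesis using i c by (auto simp: lift_index)
  next
    case False
    then obtain i0 c0 where "i = Suc i0" "c = Suc c0" "i0 < m" "c0 < m" using i c by (cases i; cases c) auto
    then show ?thesis using assms unfolding cg_def by (simp add: lift_index)
  qed
qed


lemma killx: assumes A1: "A1 \<in> carrier_mat (Suc m) (Suc m)"
  and c0: "\<forall>i<Suc m. A1 $$ (i,0) = (if i = 0 then 1 else 0)"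
  and U: "UmG (Suc m) g A1"
  and nest: "\<forall>c. 1 \<le> c \<and> c < Suc m \<longrightarrow> g c dvd g 0"
  shows "\<exists>E\<in>E_group (Suc m). cg (Suc m) g (E * A1) (lift m (dl m A1)) \<and> UmG m (\<lambda>c. g (Suc c)) (dl m A1)"
proof -
  let ?k = "Suc m"
  have dlI: "dl m A1 $$ (i,j) = A1 $$ (Suc i, Suc j)" if "i < m" "j < m" for i j
    using that unfolding dl_def by simp
  have U': "UmG m (\<lambda>c. g (Suc c)) (dl m A1)"
    unfolding UmG_def
  proof
    fix x' :: "nat \<Rightarrow> 'a"
    define x where "x = (\<lambda>c. if c = 0 then 0 else x' (c - 1))"
    obtain r where r: "\<forall>c<?k. g c dvd (x c - (\<Sum>i<?k. r i * A1 $$ (i,c)))"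
      using spec[OF U[unfolded UmG_def], of x] by blast
    have split: "(\<Sum>i<?k. r i * A1 $$ (i,c)) = r 0 * A1 $$ (0,c) + (\<Sum>i<m. r (Suc i) * A1 $$ (Suc i,c))" for c
      by (rule sum.lessThan_Suc_shift)
    have "(\<Sum>i<?k. r i * A1 $$ (i,0)) = r 0 * A1 $$ (0,0) + (\<Sum>i<m. r (Suc i) * A1 $$ (Suc i,0))" by (rule split)
    also have "\<dots> = r 0" using c0 by simp
    finally have "(\<Sum>i<?k. r i * A1 $$ (i,0)) = r 0" .
    moreover have "g 0 dvd (x 0 - (\<Sum>i<?k. r i * A1 $$ (i,0)))" using r by blast
    ultimately have "g 0 dvd - r 0" unfolding x_def by simp
    then have g0: "g 0 dvd r 0" by simp
    have "g (Suc c) dvd (x' c - (\<Sum>i<m. r (Suc i) * dl m A1 $$ (i,c)))" if c: "c < m" for c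
    proof -
      have "g (Suc c) dvd g 0" using nest c by auto
      then have "g (Suc c) dvd r 0" using g0 by (rule dvd_trans)
      then have "g (Suc c) dvd (x (Suc c) - (\<Sum>i<?k. r i * A1 $$ (i,Suc c))) + r 0 * A1 $$ (0,Suc c)"
        using r c by (intro dvd_add dvd_mult2) auto
      moreover have "(x (Suc c) - (\<Sum>i<?k. r i * A1 $$ (i,Suc c))) + r 0 * A1 $$ (0,Suc c)
          = x' c - (\<Sum>i<m. r (Suc i) * dl m A1 $$ (i,c))"
        unfolding split x_def using c by (simp add: dlI)
      ultimately show ?thesis by simp
    qed
    then show "\<exists>r. \<forall>c<m. g (Suc c) dvd (x' c - (\<Sum>i<m. r i * dl m A1 $$ (i,c)))"
      by (intro exI[of _ "\<lambda>i. r (Suc i)"]) auto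
  qed
  obtain r where r: "\<forall>c<m. g (Suc c) dvd (A1 $$ (0, Suc c) - (\<Sum>i<m. r i * dl m A1 $$ (i,c)))"
    using spec[OF U'[unfolded UmG_def], of "\<lambda>c. A1 $$ (0, Suc c)"] by blast
  define B where "B = (\<lambda>n. mat ?k ?k (\<lambda>(i,j). if i = 0 then A1 $$ (0,j) - (\<Sum>l<n. r l * A1 $$ (Suc l, j)) else A1 $$ (i,j)))"
  have cB: "B n \<in> carrier_mat ?k ?k" for n unfolding B_def by simp
  have "n \<le> m \<Longrightarrow> \<exists>E\<in>E_group ?k. E * A1 = B n" for n
  proof (induction n)
    case 0
    have "1\<^sub>m ?k * A1 = B 0" using A1 unfolding B_def by (intro eq_matI) auto
    then show ?case using E_group.one by blast
  next
    case (Suc n)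
    then obtain E where E: "E \<in> E_group ?k" "E * A1 = B n" by auto
    define P where "P = addrow_mat ?k (- r n) 0 (Suc n)"
    have P: "P \<in> E_group ?k" unfolding P_def using Suc(2) by (intro E_addrow) auto
    have "(P * E) * A1 = P * (E * A1)" using E_carrier[OF E(1)] A1 unfolding P_def
      by (intro assoc_mult_mat[of _ ?k ?k _ ?k _ ?k]) auto
    also have "\<dots> = addrow (- r n) 0 (Suc n) (B n)" unfolding P_def E(2)
      using Suc(2) by (intro addrow_mat[OF cB, symmetric]) auto
    also have "\<dots> = B (Suc n)" using Suc(2) unfolding B_def by (intro eq_matI) auto
    finally show ?case using E_mult[OF E(1) P] by blast
  qed
  then obtain E where E: "E \<in> E_group ?k" "E * A1 = B m" by blast
  have "cg ?k g (B m) (lift m (dl m A1))"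
    unfolding cg_def
  proof (intro allI impI)
    fix i c assume i: "i < ?k" and c: "c < ?k"
    show "g c dvd B m $$ (i,c) - lift m (dl m A1) $$ (i,c)"
    proof (cases "i = 0")
      case True
      show ?thesis
      proof (cases "c = 0")
        case True
        have "(\<Sum>l<m. r l * A1 $$ (Suc l, 0)) = 0" using c0 by simp
        then show ?thesis using \<open>i = 0\<close> True c0 unfolding B_def by (simp add: lift_index)
      next
        case False
        then obtain c' where c': "c = Suc c'" "c' < m" using c by (cases c) auto
        have "(\<Sum>l<m. r l * A1 $$ (Suc l, c)) = (\<Sum>l<m. r l * dl m A1 $$ (l, c'))"
          using c' by (intro sum.cong) (auto simp: dlI)
        then show ?thesis using \<open>i = 0\<close> r c' unfolding B_def by (simp add: lift_index)
      qed
    next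
      case False
      then obtain i' where i': "i = Suc i'" "i' < m" using i by (cases i) auto
      show ?thesis
      proof (cases "c = 0")
        case True then show ?thesis using i' c0 unfolding B_def by (simp add: lift_index)
      next
        case False
        then obtain c' where c': "c = Suc c'" "c' < m" using c by (cases c) auto
        then show ?thesis using i' unfolding B_def by (simp add: lift_index dlI)
      qed
    qed
  qed
  then have "cg ?k g (E * A1) (lift m (dl m A1))" using E(2) by simp
  then show ?thesis using E(1) U' by blast
qed


definition Good :: "nat \<Rightarrow> (nat \<Rightarrow> 'a::comm_ring_1) \<Rightarrow> bool" where
  "Good k g \<longleftrightarrow> (\<forall>A B. A \<in> carrier_mat k k \<longrightarrow> B \<in> carrier_mat k k \<longrightarrow> UmG k g A \<longrightarrow> UmG k g B
     \<longrightarrow> inJ k g (det A - det B) \<longrightarrow> (\<exists>E\<in>E_group k. cg k g (E * A) B))"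

lemma norm: assumes QE: "quasi_euclidean TYPE('a::comm_ring_1)" and m: "1 \<le> m"
  and nest: "\<forall>c. 1 \<le> c \<and> c < Suc m \<longrightarrow> g c dvd g 0"
  and A: "(A :: 'a mat) \<in> carrier_mat (Suc m) (Suc m)" and U: "UmG (Suc m) g A"
  shows "\<exists>E\<in>E_group (Suc m). \<exists>A'\<in>carrier_mat m m. cg (Suc m) g (E * A) (lift m A')
          \<and> UmG m (\<lambda>c. g (Suc c)) A' \<and> inJ (Suc m) g (det A - det A')"
proof -
  let ?k = "Suc m"
  obtain E1 A1 where E1: "E1 \<in> E_group ?k" and A1: "A1 \<in> carrier_mat ?k ?k"
    and c1: "cg ?k g (E1 * A) A1" and c0: "\<forall>i<?k. A1 $$ (i,0) = (if i = 0 then 1 else 0)"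
    using col0[OF QE _ A U] m by auto
  have cE1: "E1 \<in> carrier_mat ?k ?k" using E_carrier[OF E1] .
  obtain F1 where F1: "F1 \<in> E_group ?k" "F1 * E1 = 1\<^sub>m ?k" using E_inv[OF E1] by blast
  have "UmG ?k g (E1 * A)" using UmG_inv[OF cE1 E_carrier[OF F1(1)] F1(2) A U] .
  then have U1: "UmG ?k g A1" using UmG_cg[OF c1] by blast
  obtain E2 where E2: "E2 \<in> E_group ?k" and c2: "cg ?k g (E2 * A1) (lift m (dl m A1))"
    and U': "UmG m (\<lambda>c. g (Suc c)) (dl m A1)"
    using killx[OF A1 c0 U1 nest] by blast
  have cE2: "E2 \<in> carrier_mat ?k ?k" using E_carrier[OF E2] .
  have EA: "(E2 * E1) * A = E2 * (E1 * A)" using cE2 cE1 A by (rule assoc_mult_mat)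
  have "cg ?k g (E2 * (E1 * A)) (E2 * A1)" using cg_mult[OF cE2 _ A1 c1] cE1 A by simp
  then have c3: "cg ?k g ((E2 * E1) * A) (lift m (dl m A1))" using cg_trans[OF _ c2] EA by simp
  have cdl: "dl m A1 \<in> carrier_mat m m" unfolding dl_def by simp
  have cEA: "(E2 * E1) * A \<in> carrier_mat ?k ?k" using cE1 cE2 A by simp
  have "inJ ?k g (det ((E2 * E1) * A) - det (lift m (dl m A1)))" using det_cg[OF cEA lift_carrier c3] .
  moreover have "det ((E2 * E1) * A) = det A"
    using det_mult[OF _ A, of "E2 * E1"] cE1 cE2 E_det[OF E_mult[OF E1 E2]] by simp
  ultimately have "inJ ?k g (det A - det (dl m A1))" using det_lift[OF cdl] by simp
  then show ?thesis using E_mult[OF E1 E2] cdl c3 U' by blast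
qed

lemma inJ_shift: assumes "inJ (Suc m) g x" "1 \<le> m" "g 1 dvd g 0" shows "inJ m (\<lambda>c. g (Suc c)) x"
proof -
  obtain s where s: "x = (\<Sum>c<Suc m. s c * g c)" using assms(1) unfolding inJ_def by blast
  then have "x = s 0 * g 0 + (\<Sum>c<m. s (Suc c) * g (Suc c))" using sum.lessThan_Suc_shift[of "\<lambda>c. s c * g c" m] by simp
  moreover have "inJ m (\<lambda>c. g (Suc c)) (s 0 * g 0)" using assms(2,3) by (intro inJ_gen[of 0]) auto
  moreover have "inJ m (\<lambda>c. g (Suc c)) (\<Sum>c<m. s (Suc c) * g (Suc c))" unfolding inJ_def by (rule exI[of _ "\<lambda>c. s (Suc c)"]) simp
  ultimately show ?thesis using inJ_add by metis
qed

lemma good_step: assumes QE: "quasi_euclidean TYPE('a::comm_ring_1)" and m: "1 \<le> m"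
  and nest: "\<forall>c. 1 \<le> c \<and> c < Suc m \<longrightarrow> (g :: nat \<Rightarrow> 'a) c dvd g 0"
  and IH: "Good m (\<lambda>c. g (Suc c))"
  shows "Good (Suc m) g"
  unfolding Good_def
proof (intro allI impI)
  let ?k = "Suc m"
  fix A B :: "'a mat"
  assume A: "A \<in> carrier_mat ?k ?k" and B: "B \<in> carrier_mat ?k ?k" and UA: "UmG ?k g A" and UB: "UmG ?k g B"
    and d: "inJ ?k g (det A - det B)"
  obtain EA A' where EA: "EA \<in> E_group ?k" and A': "A' \<in> carrier_mat m m" and cA: "cg ?k g (EA * A) (lift m A')"
    and UA': "UmG m (\<lambda>c. g (Suc c)) A'" and dA: "inJ ?k g (det A - det A')"
    using norm[OF QE m nest A UA] by blast
  obtain EB B' where EB: "EB \<in> E_group ?k" and B': "B' \<in> carrier_mat m m" and cB: "cg ?k g (EB * B) (lift m B')"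
    and UB': "UmG m (\<lambda>c. g (Suc c)) B'" and dB: "inJ ?k g (det B - det B')"
    using norm[OF QE m nest B UB] by blast
  have "det A' - det B' = (det A - det B) - (det A - det A') + (det B - det B')" by simp
  then have "inJ ?k g (det A' - det B')" using d dA dB by (metis inJ_add inJ_diff)
  moreover have "g 1 dvd g 0" using nest m by auto
  ultimately have "inJ m (\<lambda>c. g (Suc c)) (det A' - det B')" using inJ_shift m by blast
  then obtain E' where E': "E' \<in> E_group m" and c': "cg m (\<lambda>c. g (Suc c)) (E' * A') B'"
    using IH UA' UB' A' B' unfolding Good_def by blast
  have cE': "E' \<in> carrier_mat m m" using E_carrier[OF E'] .
  have cL: "cg ?k g (lift m E' * lift m A') (lift m B')" using cg_lift[OF c'] lift_mult[OF cE' A'] by simp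
  obtain FB where FB: "FB \<in> E_group ?k" "FB * EB = 1\<^sub>m ?k" using E_inv[OF EB] by blast
  have cEA: "EA \<in> carrier_mat ?k ?k" and cEB: "EB \<in> carrier_mat ?k ?k" and cFB: "FB \<in> carrier_mat ?k ?k"
    and cLE: "lift m E' \<in> carrier_mat ?k ?k"
    using E_carrier EA EB FB by auto
  have c1: "cg ?k g (lift m E' * (EA * A)) (lift m E' * lift m A')"
    using cg_mult[OF cLE _ lift_carrier cA] cEA A by simp
  have c2: "cg ?k g (lift m E' * (EA * A)) (EB * B)"
    using cg_trans[OF cg_trans[OF c1 cL] cg_sym[OF cB]] .
  have c3: "cg ?k g (FB * (lift m E' * (EA * A))) (FB * (EB * B))"
    using cg_mult[OF cFB _ _ c2] cLE cEA A cEB B by simp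
  have "FB * (EB * B) = B" using assoc_mult_mat[OF cFB cEB B] FB(2) B by simp
  moreover have "FB * (lift m E' * (EA * A)) = (FB * (lift m E' * EA)) * A"
    by (rule assoc3[OF cFB cLE cEA A])
  ultimately have "cg ?k g ((FB * (lift m E' * EA)) * A) B" using c3 by simp
  moreover have "FB * (lift m E' * EA) \<in> E_group ?k" using E_mult[OF E_mult[OF EA lift_E[OF E']] FB(1)] .
  ultimately show "\<exists>E\<in>E_group ?k. cg ?k g (E * A) B" by blast
qed


definition sp :: "nat \<Rightarrow> nat \<Rightarrow> (nat \<Rightarrow> 'a::comm_ring_1) \<Rightarrow> (nat \<Rightarrow> 'a) \<Rightarrow> 'a mat" where
  "sp k c p q = mat k k (\<lambda>(l,j). (if l = 0 then p j else 0) + (if l = c then q j else 0) + (if l = j \<and> j \<noteq> 0 \<and> j \<noteq> c then 1 else 0))"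

lemma sp_carrier[simp]: "sp k c p q \<in> carrier_mat k k" unfolding sp_def by simp

lemma sp_index: "l < k \<Longrightarrow> j < k \<Longrightarrow> sp k c p q $$ (l,j) =
   (if l = 0 then p j else 0) + (if l = c then q j else 0) + (if l = j \<and> j \<noteq> 0 \<and> j \<noteq> c then 1 else 0)"
  unfolding sp_def by simp

lemma sp_sum: assumes c: "0 < c" "c < k" and j: "j < k"
  shows "(\<Sum>l<k. x l * sp k c p q $$ (l,j)) = x 0 * p j + x c * q j + (if j \<noteq> 0 \<and> j \<noteq> c then x j else 0)"
proof -
  have "(\<Sum>l<k. x l * sp k c p q $$ (l,j)) = (\<Sum>l<k. (if l = 0 then x 0 * p j else 0) + (if l = c then x c * q j else 0)
      + (if l = j then (if j \<noteq> 0 \<and> j \<noteq> c then x j else 0) else 0))"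
    by (rule sum.cong) (auto simp: sp_index j distrib_left)
  also have "\<dots> = x 0 * p j + x c * q j + (if j \<noteq> 0 \<and> j \<noteq> c then x j else 0)"
    using c j by (simp add: sum.distrib)
  finally show ?thesis .
qed

lemma mult_sp: assumes X: "X \<in> carrier_mat k k" and c: "0 < c" "c < k" and i: "i < k" and j: "j < k"
  shows "(X * sp k c p q) $$ (i,j) = X $$ (i,0) * p j + X $$ (i,c) * q j + (if j \<noteq> 0 \<and> j \<noteq> c then X $$ (i,j) else 0)"
  using mult_entry[OF X sp_carrier i j] sp_sum[OF c j, of "\<lambda>l. X $$ (i,l)"] by simp

lemma inJ_mono: assumes "\<forall>j<k. inJ k g2 (g j)" "inJ k g x" shows "inJ k g2 x"
proof -
  obtain s where "x = (\<Sum>j<k. s j * g j)" using assms(2) unfolding inJ_def by blast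
  moreover have "inJ k g2 (\<Sum>j<k. s j * g j)" using assms(1) by (intro inJ_sum) (auto intro: inJ_mult)
  ultimately show ?thesis by simp
qed

lemma pair: assumes QE: "quasi_euclidean TYPE('a::comm_ring_1)" and c: "0 < c" "c < k"
  shows "\<exists>g2. (\<forall>j. j \<noteq> 0 \<longrightarrow> j \<noteq> c \<longrightarrow> g2 j = g j) \<and> (g :: nat \<Rightarrow> 'a) 0 dvd g2 0 \<and> g2 c dvd g2 0 \<and> (Good k g2 \<longrightarrow> Good k g)"
proof -
  obtain d a' b' s t where ab: "g 0 = d * a'" "g c = d * b'" and st: "s * a' + t * b' = 1"
    using bezout_QE[OF QE, of "g 0" "g c"] by blast
  define g2 where "g2 = g(0 := g 0 * b', c := d)"
  have g2_0: "g2 0 = d * a' * b'" unfolding g2_def using c ab by simp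
  have g2_c: "g2 c = d" unfolding g2_def by simp
  have g2_o: "g2 j = g j" if "j \<noteq> 0" "j \<noteq> c" for j unfolding g2_def using that by simp
  define p where "p = (\<lambda>j. if j = 0 then b' else if j = c then s else (0::'a))"
  define q where "q = (\<lambda>j. if j = 0 then - a' else if j = c then t else (0::'a))"
  define p' where "p' = (\<lambda>j. if j = 0 then t else if j = c then - s else (0::'a))"
  define q' where "q' = (\<lambda>j. if j = 0 then a' else if j = c then b' else (0::'a))"
  define V where "V = sp k c p q"
  define W where "W = sp k c p' q'"
  have cV: "V \<in> carrier_mat k k" and cW: "W \<in> carrier_mat k k" unfolding V_def W_def by auto
  have k0: "0 < k" using c by simp
  have VW: "V * W = 1\<^sub>m k"
  proof (rule eq_matI)
    fix i j assume i: "i < dim_row (1\<^sub>m k :: 'a mat)" and j: "j < dim_col (1\<^sub>m k :: 'a mat)"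
    then have i: "i < k" and j: "j < k" by auto
    have "(V * W) $$ (i,j) = V $$ (i,0) * p' j + V $$ (i,c) * q' j + (if j \<noteq> 0 \<and> j \<noteq> c then V $$ (i,j) else 0)"
      unfolding W_def by (rule mult_sp[OF cV c i j])
    also have "\<dots> = (1\<^sub>m k :: 'a mat) $$ (i,j)"
      using i j c k0 st unfolding V_def p_def q_def p'_def q'_def
      by (auto simp: sp_index algebra_simps)
    finally show "(V * W) $$ (i,j) = (1\<^sub>m k :: 'a mat) $$ (i,j)" .
  qed (use cV cW in auto)
  have dvd0: "g2 0 dvd z0 * b' - zc * a'" if h: "g 0 dvd z0" "g c dvd zc" for z0 zc
  proof -
    obtain \<alpha> \<beta> where "z0 = g 0 * \<alpha>" "zc = g c * \<beta>" using h by blast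
    then have "z0 * b' - zc * a' = g2 0 * (\<alpha> - \<beta>)" using ab g2_0 by (simp add: algebra_simps)
    then show ?thesis by simp
  qed
  have dvdc: "g2 c dvd z0 * s + zc * t" if h: "g 0 dvd z0" "g c dvd zc" for z0 zc
  proof -
    obtain \<alpha> \<beta> where "z0 = g 0 * \<alpha>" "zc = g c * \<beta>" using h by blast
    then have "z0 * s + zc * t = g2 c * (a' * \<alpha> * s + b' * \<beta> * t)" using ab g2_c by (simp add: algebra_simps)
    then show ?thesis by simp
  qed
  have dvd0': "g 0 dvd z0 * t + zc * a'" if h: "g2 0 dvd z0" "g2 c dvd zc" for z0 zc
  proof -
    obtain \<alpha> \<beta> where "z0 = g2 0 * \<alpha>" "zc = g2 c * \<beta>" using h by blast
    then have "z0 * t + zc * a' = g 0 * (b' * \<alpha> * t + \<beta>)" using ab g2_0 g2_c by (simp add: algebra_simps)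
    then show ?thesis by simp
  qed
  have dvdc': "g c dvd - (z0 * s) + zc * b'" if h: "g2 0 dvd z0" "g2 c dvd zc" for z0 zc
  proof -
    obtain \<alpha> \<beta> where "z0 = g2 0 * \<alpha>" "zc = g2 c * \<beta>" using h by blast
    then have "- (z0 * s) + zc * b' = g c * (- (a' * \<alpha> * s) + \<beta>)" using ab g2_0 g2_c by (simp add: algebra_simps)
    then show ?thesis by simp
  qed
  have UmV: "UmG k g2 (A * V)" if A: "A \<in> carrier_mat k k" and U: "UmG k g A" for A
    unfolding UmG_def
  proof
    fix x :: "nat \<Rightarrow> 'a"
    define y where "y = (\<lambda>j. \<Sum>l<k. x l * W $$ (l,j))"
    obtain r where r: "\<forall>j<k. g j dvd (y j - (\<Sum>i<k. r i * A $$ (i,j)))" using spec[OF U[unfolded UmG_def], of y] by blast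
    define z where "z = (\<lambda>j. y j - (\<Sum>i<k. r i * A $$ (i,j)))"
    have yj: "y j = x 0 * p' j + x c * q' j + (if j \<noteq> 0 \<and> j \<noteq> c then x j else 0)" if "j < k" for j
      unfolding y_def W_def by (rule sp_sum[OF c that])
    have "\<forall>j<k. g2 j dvd (x j - (\<Sum>i<k. r i * (A * V) $$ (i,j)))"
    proof (intro allI impI)
      fix j assume j: "j < k"
      have y0: "y 0 = x 0 * t + x c * a'" using yj[OF k0] c unfolding p'_def q'_def by simp
      have yc: "y c = x c * b' - x 0 * s" using yj[OF c(2)] c unfolding p'_def q'_def by simp
      have L1: "(x 0 * t + x c * a') * b' + (x c * b' - x 0 * s) * (- a') = x 0 * (s * a' + t * b')"
        by (simp add: algebra_simps)
      have L2: "(x 0 * t + x c * a') * s + (x c * b' - x 0 * s) * t = x c * (s * a' + t * b')"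
        by (simp add: algebra_simps)
      have "(\<Sum>l<k. y l * V $$ (l,j)) = y 0 * p j + y c * q j + (if j \<noteq> 0 \<and> j \<noteq> c then y j else 0)"
        unfolding V_def by (rule sp_sum[OF c j])
      also have "\<dots> = x j"
      proof (cases "j = 0")
        case True then show ?thesis using y0 yc L1 st c unfolding p_def q_def by simp
      next
        case False
        show ?thesis
        proof (cases "j = c")
          case True then show ?thesis using y0 yc L2 st c unfolding p_def q_def by simp
        next
          case False then show ?thesis using \<open>j \<noteq> 0\<close> yj[OF j] unfolding p_def q_def p'_def q'_def by simp
        qed
      qed
      finally have "(\<Sum>l<k. y l * V $$ (l,j)) = x j" .
      moreover have "(\<Sum>l<k. (\<Sum>i<k. r i * A $$ (i,l)) * V $$ (l,j)) = (\<Sum>i<k. r i * (A * V) $$ (i,j))"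
        by (rule lc_mult[OF A cV j])
      ultimately have "x j - (\<Sum>i<k. r i * (A * V) $$ (i,j)) = (\<Sum>l<k. z l * V $$ (l,j))"
        unfolding z_def by (simp add: sum_subtractf left_diff_distrib)
      also have "\<dots> = z 0 * p j + z c * q j + (if j \<noteq> 0 \<and> j \<noteq> c then z j else 0)"
        unfolding V_def by (rule sp_sum[OF c j])
      also have "g2 j dvd \<dots>"
      proof -
        have z0: "g 0 dvd z 0" and zc: "g c dvd z c" using r k0 c unfolding z_def by auto
        show ?thesis
        proof (cases "j = 0")
          case True then show ?thesis using dvd0[OF z0 zc] c unfolding p_def q_def by simp
        next
          case False
          show ?thesis
          proof (cases "j = c")
            case True then show ?thesis using dvdc[OF z0 zc] c unfolding p_def q_def by simp
          next
            case False
            then show ?thesis using \<open>j \<noteq> 0\<close> r j g2_o unfolding p_def q_def z_def by simp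
          qed
        qed
      qed
      finally show "g2 j dvd (x j - (\<Sum>i<k. r i * (A * V) $$ (i,j)))" .
    qed
    then show "\<exists>r. \<forall>j<k. g2 j dvd (x j - (\<Sum>i<k. r i * (A * V) $$ (i,j)))" by blast
  qed
  have Jg: "\<forall>j<k. inJ k g2 (g j)"
  proof (intro allI impI)
    fix j assume j: "j < k"
    show "inJ k g2 (g j)"
    proof (cases "j = 0 \<or> j = c")
      case True
      then have "g2 c dvd g j" using ab g2_c by auto
      then show ?thesis using c by (intro inJ_gen[of c]) auto
    next
      case False then show ?thesis using j g2_o by (intro inJ_gen[of j]) auto
    qed
  qed
  have "Good k g" if G2: "Good k g2"
    unfolding Good_def
  proof (intro allI impI)
    fix A B :: "'a mat"
    assume A: "A \<in> carrier_mat k k" and B: "B \<in> carrier_mat k k" and UA: "UmG k g A" and UB: "UmG k g B"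
      and d: "inJ k g (det A - det B)"
    have dV: "det (A * V) - det (B * V) = det V * (det A - det B)"
      using det_mult[OF A cV] det_mult[OF B cV] by (simp add: algebra_simps)
    have "inJ k g2 (det (A * V) - det (B * V))" unfolding dV by (intro inJ_mult inJ_mono[OF Jg d])
    then obtain E where E: "E \<in> E_group k" and cE: "cg k g2 (E * (A * V)) (B * V)"
      using G2 UmV[OF A UA] UmV[OF B UB] A B cV unfolding Good_def by (meson mult_carrier_mat)
    have cEm: "E \<in> carrier_mat k k" using E_carrier[OF E] .
    have X: "E * A = ((E * A) * V) * W" using cEm A cV cW VW by (simp add: assoc_mult_mat[of _ k k _ k _ k])
    have Y: "B = (B * V) * W" using B cV cW VW by (simp add: assoc_mult_mat[of _ k k _ k _ k])
    have EAV: "(E * A) * V = E * (A * V)" using cEm A cV by (rule assoc_mult_mat)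
    have "cg k g (E * A) B"
      unfolding cg_def
    proof (intro allI impI)
      fix i j assume i: "i < k" and j: "j < k"
      define Z where "Z = E * (A * V)"
      have cZ: "Z \<in> carrier_mat k k" unfolding Z_def using cEm A cV by simp
      have cBV: "B * V \<in> carrier_mat k k" using B cV by simp
      have "(E * A) $$ (i,j) - B $$ (i,j) = (Z * W) $$ (i,j) - ((B * V) * W) $$ (i,j)"
        using X Y EAV unfolding Z_def by metis
      also have "\<dots> = (Z $$ (i,0) - (B * V) $$ (i,0)) * p' j + (Z $$ (i,c) - (B * V) $$ (i,c)) * q' j
          + (if j \<noteq> 0 \<and> j \<noteq> c then Z $$ (i,j) - (B * V) $$ (i,j) else 0)"
        unfolding W_def mult_sp[OF cZ c i j] mult_sp[OF cBV c i j] by (simp add: algebra_simps)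
      also have "g j dvd \<dots>"
      proof -
        have z0: "g2 0 dvd Z $$ (i,0) - (B * V) $$ (i,0)" and zc: "g2 c dvd Z $$ (i,c) - (B * V) $$ (i,c)"
          using cE i c k0 unfolding cg_def Z_def by auto
        show ?thesis
        proof (cases "j = 0")
          case True then show ?thesis using dvd0'[OF z0 zc] c unfolding p'_def q'_def by simp
        next
          case False
          show ?thesis
          proof (cases "j = c")
            case True then show ?thesis using dvdc'[OF z0 zc] c unfolding p'_def q'_def by simp
          next
            case False
            have "g2 j dvd Z $$ (i,j) - (B * V) $$ (i,j)" using cE i j unfolding cg_def Z_def by simp
            then show ?thesis using False \<open>j \<noteq> 0\<close> g2_o[of j] unfolding p'_def q'_def by simp
          qed
        qed
      qed
      finally show "g j dvd (E * A) $$ (i,j) - B $$ (i,j)" .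
    qed
    then show "\<exists>E\<in>E_group k. cg k g (E * A) B" using E by blast
  qed
  then show ?thesis using g2_o g2_0 g2_c ab by (intro exI[of _ g2]) auto
qed


lemma iter: assumes QE: "quasi_euclidean TYPE('a::comm_ring_1)"
  shows "m \<le> k \<Longrightarrow> \<exists>g2 :: nat \<Rightarrow> 'a. (Good k g2 \<longrightarrow> Good k (g :: nat \<Rightarrow> 'a)) \<and> (\<forall>c. 1 \<le> c \<and> c < m \<longrightarrow> g2 c dvd g2 0)"
proof (induction m)
  case 0 then show ?case by (intro exI[of _ g]) auto
next
  case (Suc m)
  have "m \<le> k" using Suc(2) by simp
  then obtain g1 :: "nat \<Rightarrow> 'a" where g1: "Good k g1 \<longrightarrow> Good k g" "\<forall>c. 1 \<le> c \<and> c < m \<longrightarrow> g1 c dvd g1 0" using Suc.IH by blast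
  show ?case
  proof (cases "m = 0")
    case True then show ?thesis using g1 by auto
  next
    case False
    then obtain g2 :: "nat \<Rightarrow> 'a" where g2: "\<forall>j. j \<noteq> 0 \<longrightarrow> j \<noteq> m \<longrightarrow> g2 j = g1 j" "g1 0 dvd g2 0" "g2 m dvd g2 0"
      "Good k g2 \<longrightarrow> Good k g1"
      using pair[OF QE, of m k g1] Suc(2) by auto
    have "\<forall>c. 1 \<le> c \<and> c < Suc m \<longrightarrow> g2 c dvd g2 0"
    proof (intro allI impI)
      fix c assume c: "1 \<le> c \<and> c < Suc m"
      show "g2 c dvd g2 0"
      proof (cases "c = m")
        case True then show ?thesis using g2 by simp
      next
        case False
        then have "g2 c = g1 c" "g1 c dvd g1 0" using g2(1) g1(2) c by auto
        then show ?thesis using g2(2) dvd_trans by simp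
      qed
    qed
    moreover have "Good k g2 \<longrightarrow> Good k g" using g1(1) g2(4) by blast
    ultimately show ?thesis by blast
  qed
qed

lemma Good0: "Good 0 g"
  unfolding Good_def cg_def by (auto intro: E_group.one)

lemma det1: assumes A: "A \<in> carrier_mat 1 1" shows "det A = A $$ (0,0)"
proof -
  have "det A = (\<Sum>i<1. A $$ (i,0) * cofactor A i 0)" by (rule laplace_expansion_column[OF A]) simp
  also have "\<dots> = A $$ (0,0) * det (mat_delete A 0 0)" by (simp add: cofactor_def)
  also have "det (mat_delete A 0 0) = 1" using mat_delete_carrier[OF A] by simp
  finally show ?thesis by simp
qed

lemma Good1: "Good 1 g"
  unfolding Good_def
proof (intro allI impI)
  fix A B :: "'a mat"
  assume A: "A \<in> carrier_mat 1 1" and B: "B \<in> carrier_mat 1 1" and d: "inJ 1 g (det A - det B)"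
  obtain s where "det A - det B = (\<Sum>c<1. s c * g c)" using d unfolding inJ_def by blast
  then have "g 0 dvd A $$ (0,0) - B $$ (0,0)" using det1[OF A] det1[OF B] by simp
  moreover have "1\<^sub>m 1 * A = A" using A by simp
  ultimately have "cg 1 g (1\<^sub>m 1 * A) B" unfolding cg_def by simp
  then show "\<exists>E\<in>E_group 1. cg 1 g (E * A) B" using E_group.one by blast
qed

lemma Good_all: assumes QE: "quasi_euclidean TYPE('a::comm_ring_1)"
  shows "Good k (g :: nat \<Rightarrow> 'a)"
proof (induction k arbitrary: g)
  case 0 then show ?case by (rule Good0)
next
  case (Suc m)
  show ?case
  proof (cases "m = 0")
    case True then show ?thesis using Good1 by simp
  next
    case False
    obtain g2 :: "nat \<Rightarrow> 'a" where g2: "Good (Suc m) g2 \<longrightarrow> Good (Suc m) g" "\<forall>c. 1 \<le> c \<and> c < Suc m \<longrightarrow> g2 c dvd g2 0"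
      using iter[OF QE, of "Suc m" "Suc m" g] by blast
    have m1: "1 \<le> m" using False by simp
    have "Good (Suc m) g2" using good_step[OF QE m1 g2(2) Suc.IH[of "\<lambda>c. g2 (Suc c)"]] .
    then show ?thesis using g2(1) by blast
  qed
qed


lemma principal: assumes N: "noetherian_ring TYPE('a::comm_ring_1)" and QE: "quasi_euclidean TYPE('a)"
  and I: "is_ideal (I :: 'a set)"
  shows "\<exists>g. I = {x. g dvd x}"
proof (rule ccontr)
  assume H: "\<not> (\<exists>g. I = {x. g dvd x})"
  have I0: "0 \<in> I" and Iadd: "\<And>x y. x \<in> I \<Longrightarrow> y \<in> I \<Longrightarrow> x + y \<in> I" and Imul: "\<And>r x. x \<in> I \<Longrightarrow> r * x \<in> I"
    using I unfolding is_ideal_def by blast+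
  have sub: "{x. g dvd x} \<subseteq> I" if g: "g \<in> I" for g
  proof
    fix x assume "x \<in> {x. g dvd x}"
    then obtain w where "x = g * w" by blast
    then have "x = w * g" by (simp add: mult.commute)
    then show "x \<in> I" using Imul[OF g] by simp
  qed
  have ex: "\<exists>x. x \<in> I \<and> \<not> g dvd x" if "g \<in> I" for g
  proof (rule ccontr)
    assume "\<not> (\<exists>x. x \<in> I \<and> \<not> g dvd x)"
    then have "I \<subseteq> {x. g dvd x}" by blast
    then have "I = {x. g dvd x}" using sub[OF that] by blast
    then show False using H by blast
  qed
  define nx where "nx = (\<lambda>g. SOME x. x \<in> I \<and> \<not> g dvd x)"
  have nx: "nx g \<in> I \<and> \<not> g dvd nx g" if "g \<in> I" for g
    unfolding nx_def by (rule someI_ex[OF ex[OF that]])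
  have exd: "\<exists>d. d dvd g \<and> d dvd nx g \<and> (\<exists>u v. d = u * g + v * nx g)" for g
  proof -
    have "\<exists>d. d dvd g \<and> d dvd y \<and> (\<exists>u v. d = u * g + v * y)" for y
    proof -
      obtain d a' b' s t where ab: "g = d * a'" "y = d * b'" and st: "s * a' + t * b' = 1"
        using bezout_QE[OF QE, of g y] by blast
      have "s * g + t * y = d * (s * a' + t * b')" unfolding ab by (simp add: algebra_simps)
      then have "d = s * g + t * y" using st by simp
      moreover have "d dvd g" "d dvd y" using ab by simp_all
      ultimately show ?thesis by blast
    qed
    then show ?thesis .
  qed
  define step where "step = (\<lambda>g. SOME d. d dvd g \<and> d dvd nx g \<and> (\<exists>u v. d = u * g + v * nx g))"
  have step: "step g dvd g \<and> step g dvd nx g \<and> (\<exists>u v. step g = u * g + v * nx g)" for g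
    unfolding step_def by (rule someI_ex[OF exd])
  define sq where "sq = (\<lambda>n. rec_nat 0 (\<lambda>_ g. step g) n)"
  have sq0: "sq 0 = 0" unfolding sq_def by simp
  have sqS: "sq (Suc n) = step (sq n)" for n unfolding sq_def by simp
  have inI: "sq n \<in> I" for n
  proof (induction n)
    case 0 then show ?case using I0 sq0 by simp
  next
    case (Suc n)
    obtain u v where uv: "step (sq n) = u * sq n + v * nx (sq n)" using step by blast
    have "nx (sq n) \<in> I" using nx[OF Suc] by blast
    then have "u * sq n + v * nx (sq n) \<in> I" using Suc by (intro Iadd Imul)
    then show ?case unfolding sqS uv .
  qed
  define C where "C = (\<lambda>n. {x. sq n dvd x})"
  have idC: "is_ideal (C n)" for n unfolding C_def is_ideal_def by (auto intro: dvd_add dvd_mult)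
  have incC: "C n \<subseteq> C (Suc n)" for n
  proof
    fix x assume "x \<in> C n"
    then have "sq n dvd x" unfolding C_def by simp
    moreover have "sq (Suc n) dvd sq n" unfolding sqS using step by blast
    ultimately show "x \<in> C (Suc n)" unfolding C_def using dvd_trans by blast
  qed
  have "(\<forall>n. is_ideal (C n)) \<and> (\<forall>n. C n \<subseteq> C (Suc n)) \<longrightarrow> (\<exists>M. \<forall>n\<ge>M. C n = C M)"
    using spec[OF N[unfolded noetherian_ring_def], of C] .
  then have "\<exists>M. \<forall>n\<ge>M. C n = C M" using idC incC by blast
  then obtain M where M: "\<forall>n\<ge>M. C n = C M" by blast
  have "sq (Suc M) dvd nx (sq M)" unfolding sqS using step by blast
  then have "nx (sq M) \<in> C (Suc M)" unfolding C_def by simp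
  moreover have "C (Suc M) = C M" by (rule M[rule_format]) simp
  ultimately have "sq M dvd nx (sq M)" unfolding C_def by simp
  then show False using nx[OF inI[of M]] by blast
qed


theorem corollaryC:
  fixes b :: "nat \<Rightarrow> 'a::comm_ring_1 set" and k :: nat and m m' :: "'a mat"
  assumes "noetherian_ring TYPE('a)"
    and "quasi_euclidean TYPE('a)"
    and "\<forall>j<k. proper_ideal (b j)"
    and "Um k b m" and "Um k b m'"
  shows "E_equiv k b m m' \<longleftrightarrow> det_eq_mod k b m m'"
proof -
  note N = assms(1) and QE = assms(2)
  have "\<forall>j. \<exists>g. j < k \<longrightarrow> b j = {x. g dvd x}"
  proof
    fix j show "\<exists>g. j < k \<longrightarrow> b j = {x. g dvd x}"
    proof (cases "j < k")
      case True
      then have "is_ideal (b j)" using assms(3) unfolding proper_ideal_def by blast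
      then show ?thesis using principal[OF N QE] by blast
    qed simp
  qed
  from choice[OF this] obtain G where G0: "\<forall>j. j < k \<longrightarrow> b j = {x. G j dvd x}" by blast
  have G: "b j = {x. G j dvd x}" if "j < k" for j using G0 that by blast
  have mem: "x \<in> b j \<longleftrightarrow> G j dvd x" if "j < k" for x j using G[OF that] by simp
  have cm: "m \<in> carrier_mat k k" and cm': "m' \<in> carrier_mat k k" using assms(4,5) unfolding Um_def by auto
  have UmG_of: "UmG k G X" if "Um k b X" for X
    using that unfolding Um_def UmG_def M_eq_def by (simp add: mem)
  have Um1: "UmG k G m" and Um2: "UmG k G m'" using UmG_of assms(4,5) by auto
  have sumJ: "det_eq_mod k b m m' \<longleftrightarrow> inJ k G (det m - det m')"
  proof
    assume "det_eq_mod k b m m'"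
    then obtain x where x: "\<forall>j<k. x j \<in> b j" "det m - det m' = (\<Sum>j<k. x j)"
      unfolding det_eq_mod_def ideal_sum_def by blast
    have "\<forall>j<k. inJ k G (x j)" using x(1) mem by (auto intro: inJ_gen)
    then have "inJ k G (\<Sum>j<k. x j)" by (intro inJ_sum) auto
    then show "inJ k G (det m - det m')" using x(2) by simp
  next
    assume "inJ k G (det m - det m')"
    then obtain s where s: "det m - det m' = (\<Sum>j<k. s j * G j)" unfolding inJ_def by blast
    have "\<forall>j<k. s j * G j \<in> b j" using mem by simp
    then have "\<exists>x. (\<forall>j<k. x j \<in> b j) \<and> det m - det m' = (\<Sum>j<k. x j)"
      using s by (intro exI[of _ "\<lambda>j. s j * G j"]) simp
    then show "det_eq_mod k b m m'" unfolding det_eq_mod_def ideal_sum_def by simp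
  qed
  have TE: "(transpose_mat E * m) $$ (j,c) = (\<Sum>i<k. E $$ (i,j) * m $$ (i,c))"
    if E: "E \<in> carrier_mat k k" and j: "j < k" and c: "c < k" for E j c
    using mult_entry[of "transpose_mat E" k k m k j c] E cm j c by simp
  show ?thesis
  proof
    assume "E_equiv k b m m'"
    then obtain E where E: "E \<in> E_group k"
      and h: "\<forall>j<k. M_eq k b (\<lambda>c. m' $$ (j, c)) (\<lambda>c. \<Sum>i<k. E $$ (i, j) * m $$ (i, c))"
      unfolding E_equiv_def by blast
    have cE: "E \<in> carrier_mat k k" using E_carrier[OF E] .
    have cT: "transpose_mat E \<in> carrier_mat k k" using cE by simp
    have "cg k G m' (transpose_mat E * m)"
      unfolding cg_def using h TE[OF cE] unfolding M_eq_def by (simp add: mem)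
    then have "inJ k G (det m' - det (transpose_mat E * m))" using det_cg[OF cm' _] cT cm by simp
    moreover have "det (transpose_mat E * m) = det m"
      using det_mult[OF cT cm] det_transpose[OF cE] E_det[OF E] by simp
    ultimately have "inJ k G (det m' - det m)" by simp
    then have "inJ k G (- (det m' - det m))" by (rule inJ_neg)
    then show "det_eq_mod k b m m'" using sumJ by simp
  next
    assume "det_eq_mod k b m m'"
    then have "inJ k G (det m - det m')" using sumJ by simp
    then obtain E where E: "E \<in> E_group k" and c: "cg k G (E * m) m'"
      using Good_all[OF QE, of k G] cm cm' Um1 Um2 unfolding Good_def by blast
    have cE: "E \<in> carrier_mat k k" using E_carrier[OF E] .
    have TT: "transpose_mat (transpose_mat E) = E" by simp
    have "\<forall>j<k. M_eq k b (\<lambda>c. m' $$ (j, c)) (\<lambda>c. \<Sum>i<k. transpose_mat E $$ (i, j) * m $$ (i, c))"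
      unfolding M_eq_def
    proof (intro allI impI)
      fix j c assume j: "j < k" and cc: "c < k"
      have "(\<Sum>i<k. transpose_mat E $$ (i, j) * m $$ (i, c)) = (E * m) $$ (j,c)"
        using TE[of "transpose_mat E" j c] cE j cc by simp
      moreover have "G c dvd m' $$ (j,c) - (E * m) $$ (j,c)" using cg_sym[OF c] j cc unfolding cg_def by simp
      ultimately show "m' $$ (j, c) - (\<Sum>i<k. transpose_mat E $$ (i, j) * m $$ (i, c)) \<in> b c"
        using mem[OF cc] by simp
    qed
    then show "E_equiv k b m m'" unfolding E_equiv_def using E_transpose[OF E] by blast
  qed
qed

end
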